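(* Every strictly convex reflexive ordered Banach space $X$ with a closed proper generating cone is a $\upsilon$-quasi-lattice.
   Context: An ordered Banach space is a real Banach space $X$ with a cone $X_+$ ($X_++X_+\subseteq X_+$, $\lambda X_+\subseteq X_+$ for $\lambda\ge0$) that is proper ($X_+\cap(-X_+)=\{0\}$); $x\le y$ means $y-x\in X_+$; the cone is generating if $X=X_+-X_+$. $X$ is strictly convex if $\|x+y\|=\|x\|+\|y\|$ implies one of $x,y$ is a non-negative multiple of the other. For $A\subseteq X$, $\upsilon(A)$ is the set of upper bounds of $A$. Let $\sigma_{x,y}(z)=\|z-x\|+\|z-y\|$. A pre-ordered Banach space with closed cone is a $\upsilon$-quasi-lattice if for every $x,y$ the set $\upsilon(\{x,y\})$ is non-empty and there exists a unique element of $\upsilon(\{x,y\})$ minimizing $\sigma_{x,y}$ on $\upsilon(\{x,y\})$. *)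

theory Defs
  imports "HOL-Analysis.Analysis"
begin

definition is_cone :: "'a::real_vector set \<Rightarrow> bool" where
  "is_cone K \<longleftrightarrow> (\<forall>x\<in>K. \<forall>y\<in>K. x + y \<in> K) \<and> (\<forall>x\<in>K. \<forall>c::real. c \<ge> 0 \<longrightarrow> c *\<^sub>R x \<in> K)"

definition proper_cone :: "'a::real_vector set \<Rightarrow> bool" where
  "proper_cone K \<longleftrightarrow> K \<inter> uminus ` K = {0}"

definition generating_cone :: "'a::real_vector set \<Rightarrow> bool" where
  "generating_cone K \<longleftrightarrow> (\<forall>x. \<exists>p\<in>K. \<exists>q\<in>K. x = p - q)"

definition cone_le :: "'a::real_vector set \<Rightarrow> 'a \<Rightarrow> 'a \<Rightarrow> bool" where
  "cone_le K x y \<longleftrightarrow> y - x \<in> K"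

definition upper_bounds :: "'a::real_vector set \<Rightarrow> 'a set \<Rightarrow> 'a set" where
  "upper_bounds K A = {z. \<forall>a\<in>A. cone_le K a z}"

definition sigma :: "'a::real_normed_vector \<Rightarrow> 'a \<Rightarrow> 'a \<Rightarrow> real" where
  "sigma x y z = norm (z - x) + norm (z - y)"

definition strictly_convex :: "'a::real_normed_vector itself \<Rightarrow> bool" where
  "strictly_convex _ \<longleftrightarrow> (\<forall>x y::'a. norm (x + y) = norm x + norm y \<longrightarrow>
      (\<exists>c::real. c \<ge> 0 \<and> x = c *\<^sub>R y) \<or> (\<exists>c::real. c \<ge> 0 \<and> y = c *\<^sub>R x))"

definition reflexive_space :: "'a::real_normed_vector itself \<Rightarrow> bool" where
  "reflexive_space _ \<longleftrightarrow> (\<forall>\<Phi> :: ('a \<Rightarrow>\<^sub>L real) \<Rightarrow>\<^sub>L real. \<exists>x::'a. \<forall>f. blinfun_apply \<Phi> f = blinfun_apply f x)"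

definition upsilon_quasi_lattice :: "'a::real_normed_vector set \<Rightarrow> bool" where
  "upsilon_quasi_lattice K \<longleftrightarrow> closed K \<and>
     (\<forall>x y. upper_bounds K {x, y} \<noteq> {} \<and>
        (\<exists>!z. z \<in> upper_bounds K {x, y} \<and>
              (\<forall>w\<in>upper_bounds K {x, y}. sigma x y z \<le> sigma x y w)))"

end

theory Submission
  imports Defs
begin

definition sublinear :: "('v::real_vector \<Rightarrow> real) \<Rightarrow> bool" where
  "sublinear p \<longleftrightarrow> (\<forall>x y. p (x + y) \<le> p x + p y) \<and> (\<forall>c x. c > 0 \<longrightarrow> p (c *\<^sub>R x) = c * p x)"

lemma sublinear_0: "sublinear p \<Longrightarrow> p 0 = 0"
proof -
  assume "sublinear p"
  then have "\<forall>c>0. \<forall>x. p (c *\<^sub>R x) = c * p x" unfolding sublinear_def by blast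
  then have "p ((2::real) *\<^sub>R 0) = 2 * p 0" by (metis zero_less_numeral)
  then show "p 0 = 0" by simp
qed
  
lemma sublinear_scale: "sublinear p \<Longrightarrow> c \<ge> 0 \<Longrightarrow> p (c *\<^sub>R x) = c * p x"
  by (cases "c = 0") (auto simp: sublinear_0 sublinear_def)

lemma sublinear_add: "sublinear p \<Longrightarrow> p (x + y) \<le> p x + p y"
  by (auto simp: sublinear_def)

lemma sublinear_neg: "sublinear p \<Longrightarrow> - p (- x) \<le> p x"
  using sublinear_add[of p x "-x"] sublinear_0[of p] by simp

lemma inf_sublinear:
  fixes S :: "'v::real_vector \<Rightarrow> real set"
  assumes ne: "\<And>v. S v \<noteq> {}" and bdd: "\<And>v. bdd_below (S v)"
    and add: "\<And>v w a b. a \<in> S v \<Longrightarrow> b \<in> S w \<Longrightarrow> \<exists>e\<in>S (v + w). e \<le> a + b"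
    and sc: "\<And>v a c. a \<in> S v \<Longrightarrow> c > 0 \<Longrightarrow> c * a \<in> S (c *\<^sub>R v)"
  shows "sublinear (\<lambda>v. Inf (S v))"
  unfolding sublinear_def
proof (intro conjI allI impI)
  fix v w
  have "Inf (S (v + w)) - b \<le> Inf (S v)" if b: "b \<in> S w" for b
  proof (rule cInf_greatest[OF ne])
    fix a assume "a \<in> S v"
    then obtain e where "e \<in> S (v + w)" "e \<le> a + b" using add b by blast
    then have "Inf (S (v+w)) \<le> a + b" using cInf_lower[OF _ bdd] by fastforce
    then show "Inf (S (v + w)) - b \<le> a" by simp
  qed
  then have "Inf (S (v + w)) - Inf (S v) \<le> Inf (S w)"
    by (intro cInf_greatest[OF ne]) (auto simp: algebra_simps)
  then show "Inf (S (v + w)) \<le> Inf (S v) + Inf (S w)" by simp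
next
  fix c :: real and v assume c: "c > 0"
  have "Inf (S (c *\<^sub>R v)) / c \<le> Inf (S v)"
  proof (rule cInf_greatest[OF ne])
    fix a assume "a \<in> S v"
    then have "Inf (S (c *\<^sub>R v)) \<le> c * a" using sc[OF _ c] cInf_lower[OF _ bdd] by blast
    then show "Inf (S (c *\<^sub>R v)) / c \<le> a" using c by (simp add: divide_le_eq mult.commute)
  qed
  moreover have "c * Inf (S v) \<le> Inf (S (c *\<^sub>R v))"
  proof (rule cInf_greatest[OF ne])
    fix a assume a: "a \<in> S (c *\<^sub>R v)"
    have "(1/c) * a \<in> S v" using sc[OF a, of "1/c"] c by simp
    then have "Inf (S v) \<le> (1/c) * a" using cInf_lower[OF _ bdd] by blast
    then show "c * Inf (S v) \<le> a" using c by (simp add: field_simps)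
  qed
  ultimately show "Inf (S (c *\<^sub>R v)) = c * Inf (S v)" using c by (simp add: field_simps)
qed

lemma minimal_sublinear_linear:
  fixes q :: "'v::real_vector \<Rightarrow> real"
  assumes q: "sublinear q"
    and minq: "\<And>r. sublinear r \<Longrightarrow> (\<forall>x. r x \<le> q x) \<Longrightarrow> r = q"
  shows "linear q"
proof -
  have neg: "q (- v) = - q v" for v
  proof -
    define S where "S x = {q (x + t *\<^sub>R v) - t * q v | t. t \<ge> 0}" for x
    have qS: "q x \<in> S x" for x
    proof -
      have "q x = q (x + 0 *\<^sub>R v) - 0 * q v" by simp
      then show ?thesis unfolding S_def by blast
    qed
    have ne: "S x \<noteq> {}" for x using qS by blast
    have lb: "- q (- x) \<le> a" if ax: "a \<in> S x" for a x
    proof -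
      obtain t where t: "t \<ge> 0" "a = q (x + t *\<^sub>R v) - t * q v" using ax S_def by auto
      have "q (t *\<^sub>R v) \<le> q (x + t *\<^sub>R v) + q (- x)"
        using sublinear_add[OF q, of "x + t *\<^sub>R v" "-x"] by simp
      then show ?thesis using t sublinear_scale[OF q t(1)] by simp
    qed
    have bdd: "bdd_below (S x)" for x using lb unfolding bdd_below_def by blast
    have sub: "sublinear (\<lambda>x. Inf (S x))"
    proof (rule inf_sublinear[OF ne bdd])
      fix x w a b assume a: "a \<in> S x" and b: "b \<in> S w"
      obtain s where s: "s \<ge> 0" "a = q (x + s *\<^sub>R v) - s * q v" using a S_def by auto
      obtain t where t: "t \<ge> 0" "b = q (w + t *\<^sub>R v) - t * q v" using b S_def by auto
      have "q ((x + w) + (s + t) *\<^sub>R v) \<le> q (x + s *\<^sub>R v) + q (w + t *\<^sub>R v)"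
        using sublinear_add[OF q, of "x + s *\<^sub>R v" "w + t *\<^sub>R v"] by (simp add: algebra_simps)
      then have "q ((x + w) + (s + t) *\<^sub>R v) - (s + t) * q v \<le> a + b"
        using s t by (simp add: algebra_simps)
      moreover have "q ((x + w) + (s + t) *\<^sub>R v) - (s + t) * q v \<in> S (x + w)"
        unfolding S_def using s t by (intro CollectI exI[of _ "s + t"]) auto
      ultimately show "\<exists>e\<in>S (x + w). e \<le> a + b" by blast
    next
      fix x a and c :: real assume a: "a \<in> S x" and c: "c > 0"
      obtain s where s: "s \<ge> 0" "a = q (x + s *\<^sub>R v) - s * q v" using a S_def by auto
      have e: "c *\<^sub>R x + (c * s) *\<^sub>R v = c *\<^sub>R (x + s *\<^sub>R v)" by (simp add: algebra_simps)
      have "q (c *\<^sub>R (x + s *\<^sub>R v)) = c * q (x + s *\<^sub>R v)"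
        using sublinear_scale[OF q, of c "x + s *\<^sub>R v"] c by simp
      then have "c * a = q (c *\<^sub>R x + (c * s) *\<^sub>R v) - (c * s) * q v"
        unfolding e s(2) by (simp add: right_diff_distrib)
      then show "c * a \<in> S (c *\<^sub>R x)" unfolding S_def using s c by (intro CollectI exI[of _ "c * s"]) auto
    qed
    have le: "Inf (S x) \<le> q x" for x by (rule cInf_lower[OF qS bdd])
    have eq: "(\<lambda>x. Inf (S x)) = q" by (rule minq[OF sub]) (use le in blast)
    have "q (- v + 1 *\<^sub>R v) - 1 * q v \<in> S (- v)" unfolding S_def by (intro CollectI exI[of _ 1]) simp
    moreover have "q (- v + 1 *\<^sub>R v) - 1 * q v = - q v" using sublinear_0[OF q] by simp
    ultimately have "- q v \<in> S (- v)" by simp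
    then have "Inf (S (- v)) \<le> - q v" by (rule cInf_lower[OF _ bdd])
    moreover have "Inf (S (- v)) = q (- v)" using fun_cong[OF eq, of "- v"] by simp
    ultimately have "q (- v) \<le> - q v" by simp
    moreover have "- q v \<le> q (- v)" using sublinear_neg[OF q, of "- v"] by simp
    ultimately show ?thesis by simp
  qed
  show ?thesis
  proof (rule linearI)
    fix x y
    have h1: "q (x + y) \<le> q x + q y" by (rule sublinear_add[OF q])
    have h2: "q (- x + - y) \<le> q (- x) + q (- y)" by (rule sublinear_add[OF q])
    have "- x + - y = - (x + y)" by simp
    then have h3: "q (- (x + y)) \<le> q (- x) + q (- y)" using h2 by simp
    have n1: "q (- (x + y)) = - q (x + y)" by (rule neg)
    have n2: "q (- x) = - q x" by (rule neg)
    have n3: "q (- y) = - q y" by (rule neg)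
    show "q (x + y) = q x + q y" using h1 h3 n1 n2 n3 by linarith
  next
    fix c :: real and x
    show "q (c *\<^sub>R x) = c *\<^sub>R q x"
    proof (cases "c \<ge> 0")
      case True then show ?thesis using sublinear_scale[OF q True] by simp
    next
      case False
      have e: "c *\<^sub>R x = (- c) *\<^sub>R (- x)" by simp
      have "q ((- c) *\<^sub>R (- x)) = (- c) * q (- x)" using False by (intro sublinear_scale[OF q]) simp
      then have "q (c *\<^sub>R x) = (- c) * q (- x)" by (simp only: e)
      also have "\<dots> = c * q x" using neg[of x] by simp
      finally show ?thesis by simp
    qed
  qed
qed

lemma hahn_banach_zero:
  fixes p :: "'v::real_vector \<Rightarrow> real"
  assumes p: "sublinear p"
  shows "\<exists>f. linear f \<and> (\<forall>x. f x \<le> p x)"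
proof -
  define A where "A = {q. sublinear q \<and> (\<forall>x. q x \<le> p x)}"
  define R where "R = {(q1, q2). q1 \<in> A \<and> q2 \<in> A \<and> (\<forall>x. q2 x \<le> q1 x)}"
  have fieldR: "Field R = A"
  proof
    show "Field R \<subseteq> A"
    proof
      fix q assume "q \<in> Field R"
      then show "q \<in> A" unfolding Field_def R_def by blast
    qed
    show "A \<subseteq> Field R"
    proof
      fix q assume "q \<in> A"
      then have "(q, q) \<in> R" unfolding R_def by auto
      then show "q \<in> Field R" by (rule FieldI1)
    qed
  qed
  have po: "Partial_order R"
    unfolding partial_order_on_def preorder_on_def
  proof (intro conjI)
    show "R \<subseteq> Field R \<times> Field R" by (auto intro: FieldI1 FieldI2)
    show "refl_on (Field R) R" unfolding refl_on_def fieldR by (auto simp: R_def)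
    show "trans R" unfolding trans_def R_def by (blast intro: order_trans)
    show "antisym R" unfolding antisym_def R_def
    proof (clarify)
      fix q1 q2 :: "'v \<Rightarrow> real"
      assume "\<forall>x. q2 x \<le> q1 x" "\<forall>x. q1 x \<le> q2 x"
      then show "q1 = q2" by (intro ext) (simp add: order_antisym)
    qed
  qed
  have "\<exists>m\<in>Field R. \<forall>a\<in>Field R. (m, a) \<in> R \<longrightarrow> a = m"
  proof (rule Zorns_po_lemma[OF po])
    fix C assume C: "C \<in> Chains R"
    have Cc: "(a, b) \<in> R \<or> (b, a) \<in> R" if "a \<in> C" "b \<in> C" for a b
      using C that unfolding Chains_def by blast
    have CA: "C \<subseteq> A"
    proof
      fix a assume a: "a \<in> C"
      have "(a, a) \<in> R" using Cc[OF a a] by blast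
      then show "a \<in> A" unfolding R_def by simp
    qed
    have Cs: "sublinear a" and Cp: "\<And>x. a x \<le> p x" if "a \<in> C" for a
      using CA that unfolding A_def by auto
    have cmp: "(\<forall>x. q1 x \<le> q2 x) \<or> (\<forall>x. q2 x \<le> q1 x)" if "q1 \<in> C" "q2 \<in> C" for q1 q2
    proof -
      have "(q1, q2) \<in> R \<or> (q2, q1) \<in> R" by (rule Cc[OF that])
      then show ?thesis unfolding R_def by auto
    qed
    show "\<exists>u\<in>Field R. \<forall>a\<in>C. (a, u) \<in> R"
    proof (cases "C = {}")
      case True
      have "p \<in> A" using p unfolding A_def by simp
      then have "p \<in> Field R" using fieldR by simp
      then show ?thesis using True by blast
    next
      case False
      define S where "S x = (\<lambda>q. q x) ` C" for x
      have ne: "S x \<noteq> {}" for x using False unfolding S_def by blast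
      have lbq: "- p (- x) \<le> q x" if qC: "q \<in> C" for q x
      proof -
        have "q (- x) \<le> p (- x)" by (rule Cp[OF qC])
        moreover have "- q (- x) \<le> q x" by (rule sublinear_neg[OF Cs[OF qC]])
        ultimately show ?thesis by simp
      qed
      have bdd: "bdd_below (S x)" for x
        unfolding S_def bdd_below_def by (rule exI[of _ "- p (- x)"]) (use lbq in blast)
      have sub: "sublinear (\<lambda>x. Inf (S x))"
      proof (rule inf_sublinear[OF ne bdd])
        fix v w a b assume "a \<in> S v" "b \<in> S w"
        then obtain q1 q2 where q: "q1 \<in> C" "q2 \<in> C" "a = q1 v" "b = q2 w" unfolding S_def by blast
        show "\<exists>e\<in>S (v + w). e \<le> a + b"
        proof (cases "\<forall>x. q1 x \<le> q2 x")
          case True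
          have "q1 (v + w) \<le> q1 v + q1 w" by (rule sublinear_add[OF Cs[OF q(1)]])
          moreover have "q1 w \<le> q2 w" using True by blast
          ultimately have "q1 (v + w) \<le> a + b" using q by linarith
          moreover have "q1 (v + w) \<in> S (v + w)" using q unfolding S_def by blast
          ultimately show ?thesis by blast
        next
          case False
          then have T: "\<forall>x. q2 x \<le> q1 x" using cmp[OF q(1,2)] by blast
          have "q2 (v + w) \<le> q2 v + q2 w" by (rule sublinear_add[OF Cs[OF q(2)]])
          moreover have "q2 v \<le> q1 v" using T by blast
          ultimately have "q2 (v + w) \<le> a + b" using q by linarith
          moreover have "q2 (v + w) \<in> S (v + w)" using q unfolding S_def by blast
          ultimately show ?thesis by blast
        qed
      next
        fix v a and c :: real assume "a \<in> S v" and c: "c > 0"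
        then obtain q1 where q: "q1 \<in> C" "a = q1 v" unfolding S_def by blast
        have "q1 (c *\<^sub>R v) = c * q1 v" using sublinear_scale[OF Cs[OF q(1)], of c v] c by simp
        then have "c * a = q1 (c *\<^sub>R v)" using q(2) by simp
        then show "c * a \<in> S (c *\<^sub>R v)" using q(1) unfolding S_def by blast
      qed
      have le: "Inf (S x) \<le> q x" if qC: "q \<in> C" for q x
      proof -
        have "q x \<in> S x" using qC unfolding S_def by blast
        then show ?thesis by (rule cInf_lower[OF _ bdd])
      qed
      obtain q0 where q0: "q0 \<in> C" using False by blast
      have up: "\<forall>x. Inf (S x) \<le> p x"
      proof
        fix x show "Inf (S x) \<le> p x" using le[OF q0, of x] Cp[OF q0, of x] by linarith
      qed
      have uA: "(\<lambda>x. Inf (S x)) \<in> A" unfolding A_def using sub up by simp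
      have uF: "(\<lambda>x. Inf (S x)) \<in> Field R" using uA fieldR by simp
      have "\<forall>a\<in>C. (a, (\<lambda>x. Inf (S x))) \<in> R"
      proof
        fix a assume aC: "a \<in> C"
        have "\<forall>x. Inf (S x) \<le> a x" using le[OF aC] by blast
        then show "(a, (\<lambda>x. Inf (S x))) \<in> R" unfolding R_def using CA aC uA by auto
      qed
      then show ?thesis using uF by blast
    qed
  qed
  then obtain q where qF: "q \<in> Field R" and qm: "\<forall>a\<in>Field R. (q, a) \<in> R \<longrightarrow> a = q"
    by blast
  have qA: "q \<in> A" using qF fieldR by simp
  have qs: "sublinear q" and qp: "\<And>x. q x \<le> p x" using qA unfolding A_def by auto
  have "linear q"
  proof (rule minimal_sublinear_linear[OF qs])
    fix r assume r: "sublinear r" "\<forall>x. r x \<le> q x"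
    have rp: "\<forall>x. r x \<le> p x"
    proof
      fix x show "r x \<le> p x" using r(2) qp[of x] by (meson order_trans)
    qed
    have rA: "r \<in> A" unfolding A_def using r(1) rp by simp
    have "(q, r) \<in> R" unfolding R_def using qA rA r(2) by simp
    moreover have "r \<in> Field R" using rA fieldR by simp
    ultimately show "r = q" using qm by blast
  qed
  then show ?thesis using qp by blast
qed


lemma linear_bounded_blinfun:
  fixes phi :: "'v::real_normed_vector \<Rightarrow> real"
  assumes "linear phi" and "\<And>v. phi v \<le> M * norm v"
  shows "bounded_linear phi"
proof -
  have "norm (phi v) \<le> norm v * M" for v
  proof -
    have "phi (- v) \<le> M * norm v" using assms(2)[of "-v"] by simp
    moreover have "phi (- v) = - phi v" using assms(1) linear_neg by blast
    ultimately show ?thesis using assms(2)[of v] by (simp add: abs_le_iff mult.commute)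
  qed
  then show ?thesis using assms(1) unfolding bounded_linear_def bounded_linear_axioms_def by blast
qed

lemma separation:
  fixes C :: "'a::real_normed_vector set"
  assumes cl: "closed C" and cv: "convex C" and ne: "C \<noteq> {}" and z: "z \<notin> C"
  shows "\<exists>f::'a \<Rightarrow>\<^sub>L real. \<exists>d>0. \<forall>c\<in>C. blinfun_apply f c + d \<le> blinfun_apply f z"
proof -
  define d where "d = infdist z C"
  have d: "d > 0" using infdist_pos_not_in_closed[OF cl ne z] d_def by simp
  have dc: "d \<le> norm (c - z)" if "c \<in> C" for c
  proof -
    have "d \<le> dist z c" using infdist_le[OF that, of z] d_def by simp
    also have "dist z c = norm (c - z)" by (simp add: dist_norm norm_minus_commute)
    finally show ?thesis .
  qed
  define S where "S v = {norm (v + t *\<^sub>R (c - z)) - t * d | t c. t \<ge> 0 \<and> c \<in> C}" for v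
  obtain c0 where c0: "c0 \<in> C" using ne by auto
  have ne': "S v \<noteq> {}" for v unfolding S_def using c0 by blast
  have lb: "- norm v \<le> a" if a: "a \<in> S v" for a v
  proof -
    obtain t c where tc: "t \<ge> 0" "c \<in> C" "a = norm (v + t *\<^sub>R (c - z)) - t * d" using a S_def by auto
    have "t * d \<le> t * norm (c - z)" using dc[OF tc(2)] tc(1) by (simp add: mult_left_mono)
    also have "\<dots> = norm (t *\<^sub>R (c - z))" using tc(1) by simp
    also have "\<dots> \<le> norm (v + t *\<^sub>R (c - z)) + norm v"
    proof -
      have "t *\<^sub>R (c - z) = (v + t *\<^sub>R (c - z)) - v" by simp
      then have "norm (t *\<^sub>R (c - z)) = norm ((v + t *\<^sub>R (c - z)) - v)" by (simp only:)
      also have "\<dots> \<le> norm (v + t *\<^sub>R (c - z)) + norm v" by (rule norm_triangle_ineq4)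
      finally show ?thesis .
    qed
    finally show ?thesis using tc by simp
  qed
  have bdd: "bdd_below (S v)" for v using lb unfolding bdd_below_def by blast
  have sub: "sublinear (\<lambda>v. Inf (S v))"
  proof (rule inf_sublinear[OF ne' bdd])
    fix v w a b assume a: "a \<in> S v" and b: "b \<in> S w"
    obtain s c1 where s: "s \<ge> 0" "c1 \<in> C" "a = norm (v + s *\<^sub>R (c1 - z)) - s * d" using a S_def by auto
    obtain t c2 where t: "t \<ge> 0" "c2 \<in> C" "b = norm (w + t *\<^sub>R (c2 - z)) - t * d" using b S_def by auto
    show "\<exists>e\<in>S (v + w). e \<le> a + b"
    proof (cases "s + t = 0")
      case True
      then have "s = 0" "t = 0" using s t by auto
      then have "norm (v + w + 0 *\<^sub>R (c0 - z)) - 0 * d \<le> a + b"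
        using s t by (simp add: norm_triangle_ineq)
      moreover have "norm (v + w + 0 *\<^sub>R (c0 - z)) - 0 * d \<in> S (v + w)"
        unfolding S_def using c0 by blast
      ultimately show ?thesis by blast
    next
      case False
      then have st: "s + t > 0" using s t by auto
      define c where "c = (s / (s + t)) *\<^sub>R c1 + (t / (s + t)) *\<^sub>R c2"
      have cC: "c \<in> C" unfolding c_def
      proof (rule convexD[OF cv s(2) t(2)])
        show "0 \<le> s / (s + t)" using s t by simp
        show "0 \<le> t / (s + t)" using s t by simp
        show "s / (s + t) + t / (s + t) = 1" using st by (simp add: add_divide_distrib[symmetric])
      qed
      have ec0: "(s + t) *\<^sub>R c = ((s + t) * (s / (s + t))) *\<^sub>R c1 + ((s + t) * (t / (s + t))) *\<^sub>R c2"
        unfolding c_def by (simp only: scaleR_add_right scaleR_scaleR)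
      have ec: "(s + t) *\<^sub>R c = s *\<^sub>R c1 + t *\<^sub>R c2"
        unfolding ec0 using st by simp
      have eq: "(s + t) *\<^sub>R (c - z) = s *\<^sub>R (c1 - z) + t *\<^sub>R (c2 - z)"
      proof -
        have "(s + t) *\<^sub>R (c - z) = (s *\<^sub>R c1 + t *\<^sub>R c2) - (s + t) *\<^sub>R z"
          by (simp only: scaleR_diff_right ec)
        also have "\<dots> = s *\<^sub>R (c1 - z) + t *\<^sub>R (c2 - z)" by (simp add: algebra_simps)
        finally show ?thesis .
      qed
      have e2: "v + w + (s + t) *\<^sub>R (c - z) = (v + s *\<^sub>R (c1 - z)) + (w + t *\<^sub>R (c2 - z))"
        by (simp only: eq add.assoc add.left_commute)
      have "norm (v + w + (s + t) *\<^sub>R (c - z)) \<le> norm (v + s *\<^sub>R (c1 - z)) + norm (w + t *\<^sub>R (c2 - z))"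
        unfolding e2 by (rule norm_triangle_ineq)
      then have "norm (v + w + (s + t) *\<^sub>R (c - z)) - (s + t) * d \<le> a + b"
        using s t by (simp add: algebra_simps)
      moreover have "norm (v + w + (s + t) *\<^sub>R (c - z)) - (s + t) * d \<in> S (v + w)"
        unfolding S_def using cC st by (intro CollectI exI[of _ "s + t"] exI[of _ c]) auto
      ultimately show ?thesis by blast
    qed
  next
    fix v a and k :: real assume a: "a \<in> S v" and k: "k > 0"
    obtain s c1 where s: "s \<ge> 0" "c1 \<in> C" "a = norm (v + s *\<^sub>R (c1 - z)) - s * d" using a S_def by auto
    have "k * a = norm (k *\<^sub>R v + (k * s) *\<^sub>R (c1 - z)) - (k * s) * d"
    proof -
      have "k *\<^sub>R v + (k * s) *\<^sub>R (c1 - z) = k *\<^sub>R (v + s *\<^sub>R (c1 - z))" by (simp add: algebra_simps)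
      then have "norm (k *\<^sub>R v + (k * s) *\<^sub>R (c1 - z)) = k * norm (v + s *\<^sub>R (c1 - z))"
        using k by (simp only: norm_scaleR)
      then show ?thesis using s(3) by (simp add: right_diff_distrib)
    qed
    then show "k * a \<in> S (k *\<^sub>R v)" unfolding S_def using s k by (intro CollectI exI[of _ "k * s"] exI[of _ c1]) auto
  qed
  obtain phi where phi: "linear phi" "\<And>x. phi x \<le> Inf (S x)" using hahn_banach_zero[OF sub] by blast
  have up: "Inf (S v) \<le> norm v" for v
  proof -
    have "norm (v + 0 *\<^sub>R (c0 - z)) - 0 * d \<in> S v" unfolding S_def using c0 by blast
    then show ?thesis using cInf_lower[OF _ bdd] by fastforce
  qed
  have bl: "bounded_linear phi"
  proof (rule linear_bounded_blinfun[OF phi(1), of 1])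
    fix v show "phi v \<le> 1 * norm v" using phi(2)[of v] up[of v] by linarith
  qed
  have key: "phi (c - z) \<ge> d" if c: "c \<in> C" for c
  proof -
    have "norm (- (c - z) + 1 *\<^sub>R (c - z)) - 1 * d \<in> S (- (c - z))" unfolding S_def
      by (rule CollectI, rule exI[of _ 1], rule exI[of _ c]) (simp add: c)
    moreover have "norm (- (c - z) + 1 *\<^sub>R (c - z)) - 1 * d = - d" by simp
    ultimately have "- d \<in> S (- (c - z))" by simp
    then have "Inf (S (- (c - z))) \<le> - d" by (rule cInf_lower[OF _ bdd])
    then have "phi (- (c - z)) \<le> - d" using phi(2)[of "- (c - z)"] by linarith
    moreover have "phi (- (c - z)) = - phi (c - z)" by (rule linear_neg[OF phi(1)])
    ultimately show ?thesis by linarith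
  qed
  define f where "f = Blinfun (\<lambda>v. - phi v)"
  have fa: "blinfun_apply f = (\<lambda>v. - phi v)" unfolding f_def
    by (rule bounded_linear_Blinfun_apply) (use bl in \<open>simp add: bounded_linear_minus\<close>)
  have "\<forall>c\<in>C. blinfun_apply f c + d \<le> blinfun_apply f z"
  proof
    fix c assume c: "c \<in> C"
    have "phi (c - z) = phi c - phi z" by (rule linear_diff[OF phi(1)])
    then show "blinfun_apply f c + d \<le> blinfun_apply f z" using key[OF c] unfolding fa by linarith
  qed
  then show ?thesis using d by blast
qed


lemma reflexive_nested:
  fixes C :: "nat \<Rightarrow> 'a::real_normed_vector set"
  assumes refl: "reflexive_space TYPE('a)"
    and cl: "\<And>k. closed (C k)" and cv: "\<And>k. convex (C k)" and ne: "\<And>k. C k \<noteq> {}"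
    and dec: "\<And>k l. k \<le> l \<Longrightarrow> C l \<subseteq> C k"
    and bd: "\<And>k c. c \<in> C k \<Longrightarrow> norm c \<le> M"
  shows "\<exists>z. \<forall>k. z \<in> C k"
proof -
  have M: "M \<ge> 0" using ne[of 0] bd by (meson ex_in_conv norm_ge_zero order_trans)
  define S where "S f = {a. \<exists>k. \<forall>c\<in>C k. blinfun_apply f c \<le> a}" for f :: "'a \<Rightarrow>\<^sub>L real"
  have inS: "norm f * M \<in> S f" for f
  proof -
    have "blinfun_apply f c \<le> norm f * M" if "c \<in> C 0" for c
    proof -
      have "blinfun_apply f c \<le> norm f * norm c" using norm_blinfun[of f c] by simp
      also have "\<dots> \<le> norm f * M" using bd[OF that] by (simp add: mult_left_mono)
      finally show ?thesis .
    qed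
    then show ?thesis unfolding S_def by blast
  qed
  have ne': "S f \<noteq> {}" for f using inS by blast
  have lb: "- (norm f * M) \<le> a" if a: "a \<in> S f" for a f
  proof -
    obtain k where k: "\<forall>c\<in>C k. blinfun_apply f c \<le> a" using a S_def by auto
    obtain c where c: "c \<in> C k" using ne by blast
    have "- (norm f * norm c) \<le> blinfun_apply f c" using norm_blinfun[of f c] by simp
    moreover have "norm f * norm c \<le> norm f * M" using bd[OF c] by (simp add: mult_left_mono)
    ultimately show ?thesis using k c by fastforce
  qed
  have bdd: "bdd_below (S f)" for f using lb unfolding bdd_below_def by blast
  have sub: "sublinear (\<lambda>f. Inf (S f))"
  proof (rule inf_sublinear[OF ne' bdd])
    fix f g a b assume a: "a \<in> S f" and b: "b \<in> S g"
    obtain k1 where k1: "\<forall>c\<in>C k1. blinfun_apply f c \<le> a" using a S_def by auto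
    obtain k2 where k2: "\<forall>c\<in>C k2. blinfun_apply g c \<le> b" using b S_def by auto
    have "\<forall>c\<in>C (max k1 k2). blinfun_apply (f + g) c \<le> a + b"
    proof
      fix c assume c: "c \<in> C (max k1 k2)"
      have "c \<in> C k1" using c dec[of k1 "max k1 k2"] by auto
      then have fa: "blinfun_apply f c \<le> a" using k1 by blast
      have "c \<in> C k2" using c dec[of k2 "max k1 k2"] by auto
      then have gb: "blinfun_apply g c \<le> b" using k2 by blast
      have "blinfun_apply (f + g) c = blinfun_apply f c + blinfun_apply g c" by (simp add: blinfun.add_left)
      then show "blinfun_apply (f + g) c \<le> a + b" using fa gb by linarith
    qed
    then show "\<exists>e\<in>S (f + g). e \<le> a + b" unfolding S_def by blast
  next
    fix f a and t :: real assume a: "a \<in> S f" and t: "t > 0"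
    obtain k where k: "\<forall>c\<in>C k. blinfun_apply f c \<le> a" using a S_def by auto
    have "\<forall>c\<in>C k. blinfun_apply (t *\<^sub>R f) c \<le> t * a"
    proof
      fix c assume c: "c \<in> C k"
      have "blinfun_apply f c \<le> a" using k c by blast
      then have "t * blinfun_apply f c \<le> t * a" using t by (simp add: mult_left_mono)
      moreover have "blinfun_apply (t *\<^sub>R f) c = t * blinfun_apply f c" by (simp add: blinfun.scaleR_left)
      ultimately show "blinfun_apply (t *\<^sub>R f) c \<le> t * a" by simp
    qed
    then show "t * a \<in> S (t *\<^sub>R f)" unfolding S_def by blast
  qed
  obtain phi where phi: "linear phi" "\<And>f. phi f \<le> Inf (S f)" using hahn_banach_zero[OF sub] by blast
  have up: "Inf (S f) \<le> M * norm f" for f using cInf_lower[OF inS bdd] by (simp add: mult.commute)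
  have bl: "bounded_linear phi" using linear_bounded_blinfun[OF phi(1), of M] phi(2) up
    by (meson order_trans)
  obtain z where z: "\<And>f. blinfun_apply (Blinfun phi) f = blinfun_apply f z"
    using refl unfolding reflexive_space_def by blast
  have zf: "phi f = blinfun_apply f z" for f using z[of f] bounded_linear_Blinfun_apply[OF bl] by simp
  have "z \<in> C k" for k
  proof (rule ccontr)
    assume "z \<notin> C k"
    then obtain f :: "'a \<Rightarrow>\<^sub>L real" and d where d: "d > 0" "\<forall>c\<in>C k. blinfun_apply f c + d \<le> blinfun_apply f z"
      using separation[OF cl cv ne] by blast
    have "blinfun_apply f z - d \<in> S f" unfolding S_def using d by (auto simp: algebra_simps)
    then have "Inf (S f) \<le> blinfun_apply f z - d" using cInf_lower[OF _ bdd] by blast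
    then have "phi f \<le> blinfun_apply f z - d" using phi(2) order_trans by blast
    then show False using zf d by simp
  qed
  then show ?thesis by blast
qed


lemma coll:
  fixes a b w :: "'a::real_normed_vector"
  assumes sc: "strictly_convex TYPE('a)" and n: "norm (a + b) = norm a + norm b"
    and ab: "a - b = w" and w: "w \<noteq> 0"
  shows "\<exists>\<alpha> \<beta>. a = \<alpha> *\<^sub>R w \<and> b = \<beta> *\<^sub>R w \<and> \<alpha> = \<beta> + 1 \<and> (\<beta> \<ge> 0 \<or> \<alpha> \<le> 0)"
proof -
  from sc n have "(\<exists>c\<ge>0. a = c *\<^sub>R b) \<or> (\<exists>c\<ge>0. b = c *\<^sub>R a)"
    unfolding strictly_convex_def by blast
  then show ?thesis
  proof
    assume "\<exists>c\<ge>0. a = c *\<^sub>R b"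
    then obtain c where c: "c \<ge> 0" "a = c *\<^sub>R b" by blast
    have wb: "w = (c - 1) *\<^sub>R b" using ab c by (simp add: algebra_simps)
    then have c1: "c \<noteq> 1" using w by auto
    have b: "b = (1 / (c - 1)) *\<^sub>R w" using wb c1 by simp
    have a: "a = (c / (c - 1)) *\<^sub>R w" using b c by simp
    have "c / (c - 1) = 1 / (c - 1) + 1" using c1 by (simp add: field_simps)
    moreover have "1 / (c - 1) \<ge> 0 \<or> c / (c - 1) \<le> 0"
      using c c1 by (cases "c > 1") (auto simp: divide_nonneg_neg)
    ultimately show ?thesis using a b by blast
  next
    assume "\<exists>c\<ge>0. b = c *\<^sub>R a"
    then obtain c where c: "c \<ge> 0" "b = c *\<^sub>R a" by blast
    have wa: "w = (1 - c) *\<^sub>R a" using ab c by (simp add: algebra_simps)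
    then have c1: "c \<noteq> 1" using w by auto
    have a: "a = (1 / (1 - c)) *\<^sub>R w" using wa c1 by simp
    have b: "b = (c / (1 - c)) *\<^sub>R w" using a c by simp
    have "1 / (1 - c) = c / (1 - c) + 1" using c1 by (simp add: field_simps)
    moreover have "c / (1 - c) \<ge> 0 \<or> 1 / (1 - c) \<le> 0"
      using c c1 by (cases "c > 1") (auto)
    ultimately show ?thesis using a b by blast
  qed
qed

lemma cone_pos_neg:
  assumes K: "is_cone K" "proper_cone K" and l: "l *\<^sub>R w \<in> K" "l > 0" and m: "m *\<^sub>R w \<in> K" "m < 0"
  shows "w = 0"
proof -
  have sc: "\<And>x c. x \<in> K \<Longrightarrow> c \<ge> 0 \<Longrightarrow> c *\<^sub>R x \<in> K" using K(1) unfolding is_cone_def by blast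
  have "(1 / l) *\<^sub>R (l *\<^sub>R w) \<in> K" by (rule sc[OF l(1)]) (use l(2) in simp)
  moreover have "(1 / l) *\<^sub>R (l *\<^sub>R w) = w" using l(2) by simp
  ultimately have w1: "w \<in> K" by simp
  have "(-1 / m) *\<^sub>R (m *\<^sub>R w) \<in> K" by (rule sc[OF m(1)]) (use m(2) in \<open>simp add: divide_nonpos_neg\<close>)
  moreover have "(-1 / m) *\<^sub>R (m *\<^sub>R w) = - w" using m(2) by simp
  ultimately have w2: "- w \<in> K" by simp
  have "w \<in> uminus ` K" using w2 by (metis image_eqI minus_minus)
  then show ?thesis using w1 K(2) unfolding proper_cone_def by blast
qed

lemma uniq_core:
  fixes a b a' b' w :: "'a::real_normed_vector"
  assumes sc: "strictly_convex TYPE('a)" and K: "is_cone K" "proper_cone K"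
    and inK: "a \<in> K" "b \<in> K" "a' \<in> K" "b' \<in> K"
    and ab: "a - b = w" and ab': "a' - b' = w"
    and n: "norm (a + b) = norm a + norm b" and n': "norm (a' + b') = norm a' + norm b'"
    and s: "norm a + norm a' = norm b + norm b'"
  shows "w = 0"
proof (rule ccontr)
  assume w: "w \<noteq> 0"
  obtain \<alpha> \<beta> where A: "a = \<alpha> *\<^sub>R w" "b = \<beta> *\<^sub>R w" "\<alpha> = \<beta> + 1" "\<beta> \<ge> 0 \<or> \<alpha> \<le> 0"
    using coll[OF sc n ab w] by blast
  obtain \<alpha>' \<beta>' where A': "a' = \<alpha>' *\<^sub>R w" "b' = \<beta>' *\<^sub>R w" "\<alpha>' = \<beta>' + 1" "\<beta>' \<ge> 0 \<or> \<alpha>' \<le> 0"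
    using coll[OF sc n' ab' w] by blast
  have na: "norm a = \<bar>\<alpha>\<bar> * norm w" using A(1) by simp
  have nb: "norm b = \<bar>\<beta>\<bar> * norm w" using A(2) by simp
  have na': "norm a' = \<bar>\<alpha>'\<bar> * norm w" using A'(1) by simp
  have nb': "norm b' = \<bar>\<beta>'\<bar> * norm w" using A'(2) by simp
  have "(\<bar>\<alpha>\<bar> + \<bar>\<alpha>'\<bar>) * norm w = (\<bar>\<beta>\<bar> + \<bar>\<beta>'\<bar>) * norm w"
    using s unfolding na nb na' nb' by (simp add: distrib_right)
  then have e: "\<bar>\<alpha>\<bar> + \<bar>\<alpha>'\<bar> = \<bar>\<beta>\<bar> + \<bar>\<beta>'\<bar>" using w by simp
  have "\<exists>l m. l *\<^sub>R w \<in> K \<and> l > 0 \<and> m *\<^sub>R w \<in> K \<and> m < 0"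
  proof (cases "\<beta> \<ge> 0")
    case True
    then have "\<alpha>' \<le> 0" using A' e A by auto
    then show ?thesis using True A A' inK by (intro exI[of _ \<alpha>] exI[of _ \<beta>']) auto
  next
    case False
    then have "\<alpha> \<le> 0" using A by auto
    then have "\<beta>' \<ge> 0" using A' e A by auto
    then show ?thesis using False A A' inK by (intro exI[of _ \<alpha>'] exI[of _ \<beta>]) auto
  qed
  then show False using cone_pos_neg[OF K] w by blast
qed


lemma comb_sub:
  fixes a b x :: "'a::real_vector"
  assumes "u + v = 1"
  shows "u *\<^sub>R a + v *\<^sub>R b - x = u *\<^sub>R (a - x) + v *\<^sub>R (b - x)"
proof -
  have hx: "u *\<^sub>R x + v *\<^sub>R x = x" using assms by (metis scaleR_add_left scaleR_one)
  have "u *\<^sub>R (a - x) + v *\<^sub>R (b - x) = u *\<^sub>R a + v *\<^sub>R b - (u *\<^sub>R x + v *\<^sub>R x)"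
    by (simp add: scaleR_diff_right)
  then show ?thesis unfolding hx by simp
qed

theorem theorem6p1:
  fixes K :: "'a::banach set"
  assumes "strictly_convex TYPE('a)"
    and "reflexive_space TYPE('a)"
    and "is_cone K"
    and "closed K"
    and "proper_cone K"
    and "generating_cone K"
  shows "upsilon_quasi_lattice K"
  unfolding upsilon_quasi_lattice_def
proof (intro conjI allI)
  note sc = assms(1) and refl = assms(2) and cone = assms(3) and clK = assms(4)
    and prp = assms(5) and gen = assms(6)
  show "closed K" by fact
  fix x y :: 'a
  define U where "U = upper_bounds K {x, y}"
  have Umem: "z \<in> U \<longleftrightarrow> z - x \<in> K \<and> z - y \<in> K" for z
    unfolding U_def upper_bounds_def cone_le_def by auto
  have addK: "a \<in> K \<Longrightarrow> b \<in> K \<Longrightarrow> a + b \<in> K" for a b using cone unfolding is_cone_def by blast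
  have scK: "a \<in> K \<Longrightarrow> c \<ge> 0 \<Longrightarrow> c *\<^sub>R a \<in> K" for a c using cone unfolding is_cone_def by blast
  obtain p q where pq: "p \<in> K" "q \<in> K" "x - y = p - q" using gen unfolding generating_cone_def by blast
  have e1: "x + q - y = (x - y) + q" by (simp add: algebra_simps)
  have e2: "(x - y) + q = p" using pq(3) by simp
  have "x + q \<in> U" unfolding Umem using pq(1,2) e1 e2 by simp
  then have Une: "U \<noteq> {}" by blast
  then show "upper_bounds K {x, y} \<noteq> {}" unfolding U_def .
  have Ucv: "u *\<^sub>R z1 + v *\<^sub>R z2 \<in> U" if "z1 \<in> U" "z2 \<in> U" "u \<ge> 0" "v \<ge> 0" "u + v = 1" for z1 z2 u v
  proof -
    have "u *\<^sub>R z1 + v *\<^sub>R z2 - x = u *\<^sub>R (z1 - x) + v *\<^sub>R (z2 - x)"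
      using comb_sub[OF that(5)] by blast
    moreover have "u *\<^sub>R z1 + v *\<^sub>R z2 - y = u *\<^sub>R (z1 - y) + v *\<^sub>R (z2 - y)"
      using comb_sub[OF that(5)] by blast
    ultimately show ?thesis using that addK scK unfolding Umem by simp
  qed
  have Ucl: "closed U"
  proof -
    have "U = (\<lambda>z. z - x) -` K \<inter> (\<lambda>z. z - y) -` K" using Umem by auto
    moreover have "closed ((\<lambda>z. z - x) -` K)" by (rule continuous_closed_vimage[OF clK]) (intro continuous_intros)
    moreover have "closed ((\<lambda>z. z - y) -` K)" by (rule continuous_closed_vimage[OF clK]) (intro continuous_intros)
    ultimately show ?thesis by (simp add: closed_Int)
  qed
  let ?s = "sigma x y"
  have sig: "?s w = norm (w - x) + norm (w - y)" for w by (simp add: sigma_def)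
  have scv: "?s (u *\<^sub>R z1 + v *\<^sub>R z2) \<le> u * ?s z1 + v * ?s z2" if "u \<ge> 0" "v \<ge> 0" "u + v = 1" for z1 z2 u v
  proof -
    have e1: "u *\<^sub>R z1 + v *\<^sub>R z2 - x = u *\<^sub>R (z1 - x) + v *\<^sub>R (z2 - x)"
      using comb_sub[OF that(3)] by blast
    have e2: "u *\<^sub>R z1 + v *\<^sub>R z2 - y = u *\<^sub>R (z1 - y) + v *\<^sub>R (z2 - y)"
      using comb_sub[OF that(3)] by blast
    have "norm (u *\<^sub>R (z1 - x) + v *\<^sub>R (z2 - x)) \<le> u * norm (z1 - x) + v * norm (z2 - x)"
      using norm_triangle_ineq[of "u *\<^sub>R (z1 - x)" "v *\<^sub>R (z2 - x)"] that by simp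
    moreover have "norm (u *\<^sub>R (z1 - y) + v *\<^sub>R (z2 - y)) \<le> u * norm (z1 - y) + v * norm (z2 - y)"
      using norm_triangle_ineq[of "u *\<^sub>R (z1 - y)" "v *\<^sub>R (z2 - y)"] that by simp
    ultimately show ?thesis unfolding sig e1 e2 by (simp add: algebra_simps)
  qed
  have scont: "continuous_on UNIV ?s" unfolding sigma_def by (intro continuous_intros)
  define m where "m = Inf (?s ` U)"
  have sbdd: "bdd_below (?s ` U)" unfolding bdd_below_def sigma_def
    by (intro exI[of _ 0]) auto
  have mle: "m \<le> ?s w" if "w \<in> U" for w unfolding m_def using cInf_lower[OF _ sbdd] that by blast
  define C where "C k = {w \<in> U. ?s w \<le> m + 1 / real (Suc k)}" for k
  have "\<exists>z. \<forall>k. z \<in> C k"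
  proof (rule reflexive_nested[OF refl])
    fix k
    have "closed {w. ?s w \<le> m + 1 / real (Suc k)}"
      by (rule closed_Collect_le[OF scont]) auto
    moreover have "C k = U \<inter> {w. ?s w \<le> m + 1 / real (Suc k)}" unfolding C_def by blast
    ultimately show "closed (C k)" using Ucl by (simp add: closed_Int)
    show "convex (C k)"
    proof (rule convexI)
      fix z1 z2 and u v :: real assume h0: "z1 \<in> C k" "z2 \<in> C k" "0 \<le> u" "0 \<le> v" "u + v = 1"
      have h: "z1 \<in> U" "?s z1 \<le> m + 1 / real (Suc k)" "z2 \<in> U" "?s z2 \<le> m + 1 / real (Suc k)"
        "0 \<le> u" "0 \<le> v" "u + v = 1" using h0 unfolding C_def by auto
      have inU: "u *\<^sub>R z1 + v *\<^sub>R z2 \<in> U" using Ucv h by blast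
      have "u * ?s z1 + v * ?s z2 \<le> u * (m + 1 / real (Suc k)) + v * (m + 1 / real (Suc k))"
        using h by (intro add_mono mult_left_mono) auto
      also have "\<dots> = (u + v) * (m + 1 / real (Suc k))" by (simp only: distrib_right)
      also have "\<dots> = m + 1 / real (Suc k)" using h(7) by simp
      finally have "?s (u *\<^sub>R z1 + v *\<^sub>R z2) \<le> m + 1 / real (Suc k)" using scv[OF h(5-7), of z1 z2] by linarith
      then show "u *\<^sub>R z1 + v *\<^sub>R z2 \<in> C k" using inU unfolding C_def by blast
    qed
    have "m < m + 1 / real (Suc k)" by simp
    then obtain t where "t \<in> ?s ` U" "t < m + 1 / real (Suc k)"
      using cInf_lessD[of "?s ` U"] Une unfolding m_def by blast
    then show "C k \<noteq> {}" unfolding C_def by fastforce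
  next
    fix k l :: nat assume "k \<le> l"
    then have "1 / real (Suc l) \<le> 1 / real (Suc k)" by (simp add: frac_le)
    then show "C l \<subseteq> C k" unfolding C_def by auto
  next
    fix k c assume "c \<in> C k"
    then have s1: "?s c \<le> m + 1 / real (Suc k)" unfolding C_def by blast
    have s2: "1 / real (Suc k) \<le> 1" by simp
    have s3: "norm c \<le> norm (c - x) + norm x" by (metis norm_triangle_sub add.commute)
    have s4: "0 \<le> norm (c - y)" by simp
    show "norm c \<le> m + 1 + norm x" using s1 s2 s3 s4 unfolding sig by linarith
  qed
  then obtain z where z: "\<And>k. z \<in> C k" by blast
  have zU: "z \<in> U" using z[of 0] unfolding C_def by blast
  have zm: "?s z \<le> m"
  proof (rule ccontr)
    assume "\<not> ?s z \<le> m"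
    then have "0 < ?s z - m" by simp
    then obtain n where n: "inverse (real (Suc n)) < ?s z - m" using reals_Archimedean by blast
    have "?s z \<le> m + 1 / real (Suc n)" using z[of n] unfolding C_def by blast
    then show False using n by (simp add: inverse_eq_divide)
  qed
  have zmin: "\<forall>w\<in>U. ?s z \<le> ?s w"
  proof
    fix w assume "w \<in> U" then show "?s z \<le> ?s w" using zm mle[of w] by linarith
  qed
  show "\<exists>!z. z \<in> upper_bounds K {x, y} \<and> (\<forall>w\<in>upper_bounds K {x, y}. ?s z \<le> ?s w)"
    unfolding U_def[symmetric]
  proof (rule ex_ex1I)
    show "\<exists>z. z \<in> U \<and> (\<forall>w\<in>U. ?s z \<le> ?s w)" using zU zmin by blast
  next
    fix z1 z2 assume h1: "z1 \<in> U \<and> (\<forall>w\<in>U. ?s z1 \<le> ?s w)" and h2: "z2 \<in> U \<and> (\<forall>w\<in>U. ?s z2 \<le> ?s w)"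
    have "?s z1 \<le> ?s z2" using h1 h2 by blast
    moreover have "?s z2 \<le> ?s z1" using h1 h2 by blast
    ultimately have eqs: "?s z1 = ?s z2" by simp
    define mid where "mid = (1/2::real) *\<^sub>R z1 + (1/2::real) *\<^sub>R z2"
    have midU: "mid \<in> U" unfolding mid_def by (rule Ucv) (use h1 h2 in auto)
    have ge: "?s z1 \<le> ?s mid" using h1 midU by blast
    define a where "a = z1 - x" define b where "b = z2 - x"
    define a' where "a' = z1 - y" define b' where "b' = z2 - y"
    have m1: "mid - x = (1/2::real) *\<^sub>R (a + b)"
    proof -
      have "mid - x = (1/2::real) *\<^sub>R (z1 - x) + (1/2::real) *\<^sub>R (z2 - x)"
        unfolding mid_def by (rule comb_sub) simp
      also have "\<dots> = (1/2::real) *\<^sub>R ((z1 - x) + (z2 - x))" by (rule scaleR_add_right[symmetric])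
      finally show ?thesis unfolding a_def b_def .
    qed
    have m2: "mid - y = (1/2::real) *\<^sub>R (a' + b')"
    proof -
      have "mid - y = (1/2::real) *\<^sub>R (z1 - y) + (1/2::real) *\<^sub>R (z2 - y)"
        unfolding mid_def by (rule comb_sub) simp
      also have "\<dots> = (1/2::real) *\<^sub>R ((z1 - y) + (z2 - y))" by (rule scaleR_add_right[symmetric])
      finally show ?thesis unfolding a'_def b'_def .
    qed
    have t1: "norm (a + b) \<le> norm a + norm b" by (rule norm_triangle_ineq)
    have t2: "norm (a' + b') \<le> norm a' + norm b'" by (rule norm_triangle_ineq)
    have s1: "?s z1 = norm a + norm a'" "?s z2 = norm b + norm b'" unfolding sig a_def a'_def b_def b'_def by auto
    have smid0: "?s mid = (norm (a + b) + norm (a' + b')) / 2" unfolding sig m1 m2 by simp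
    have smid: "2 * ?s mid = norm (a + b) + norm (a' + b')" unfolding smid0 by simp
    have n1: "norm (a + b) = norm a + norm b" using t1 t2 ge eqs s1 smid by linarith
    have n2: "norm (a' + b') = norm a' + norm b'" using t1 t2 ge eqs s1 smid by linarith
    have z1U: "z1 - x \<in> K" "z1 - y \<in> K" using h1 Umem by blast+
    have z2U: "z2 - x \<in> K" "z2 - y \<in> K" using h2 Umem by blast+
    have "z1 - z2 = 0"
    proof (rule uniq_core[OF sc cone prp, of a b a' b'])
      show "a \<in> K" "b \<in> K" "a' \<in> K" "b' \<in> K" unfolding a_def b_def a'_def b'_def using z1U z2U by auto
      show "a - b = z1 - z2" unfolding a_def b_def by simp
      show "a' - b' = z1 - z2" unfolding a'_def b'_def by simp
      show "norm (a + b) = norm a + norm b" by (rule n1)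
      show "norm (a' + b') = norm a' + norm b'" by (rule n2)
      show "norm a + norm a' = norm b + norm b'" using eqs s1 by simp
    qed
    then show "z1 = z2" by simp
  qed
qed

end
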